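(* Let the words $C_n$, $D_n$ over $\{1,2\}$ be defined by $C_1=1$, $D_1=2$, $C_{k+1}=C_k\,1\,D_k$, $D_{k+1}=C_k\,2\,D_k$ for $k\ge 1$. Let $n\geq 1$ and $k\geq 1$. The number of occurrences of the subsequence $1^k$ in $C_n$ (i.e. the number of $k$-element sets of positions of $C_n$ all carrying the letter $1$) is $\binom{2^{n-1}}{k}$, and the number of occurrences of the subsequence $2^k$ in $C_n$ is $\binom{2^{n-1}-1}{k}$. Consequently the number of occurrences of the classical pattern $1^k=1\text{-}1\text{-}\cdots\text{-}1$ ($k$ letters) in $C_n$ (i.e. the number of $k$-element sets of positions of $C_n$ all carrying the same letter) equals $$\binom{2^{n-1}}{k}+\binom{2^{n-1}-1}{k},$$ and, provided $k\neq 2^{n-1}$, this equals $\frac{2^n-k}{2^{n-1}-k}\binom{2^{n-1}-1}{k}$.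
   Context: A subsequence occurrence of a word $u=u_1\cdots u_k$ in a word $w=w_1\cdots w_m$ is a choice of indices $i_1<\cdots<i_k$ with $w_{i_j}=u_j$ for all $j$. An occurrence of the (classical) pattern $1\text{-}1\text{-}\cdots\text{-}1$ of length $k$ is a choice of indices $i_1<\cdots<i_k$ such that $w_{i_1}=\cdots=w_{i_k}$. *)

theory Defs
  imports Complex_Main
begin

text \<open>The pair of words (C_k, D_k) over the alphabet {1,2}, for k \<ge> 1.
  Index 0 is an unused dummy that we set equal to index 1.\<close>
fun CD :: "nat \<Rightarrow> nat list \<times> nat list" where
  "CD 0 = ([1], [2])"
| "CD (Suc 0) = ([1], [2])"
| "CD (Suc (Suc k)) = (let (c, d) = CD (Suc k) in (c @ [1] @ d, c @ [2] @ d))"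

definition Cw :: "nat \<Rightarrow> nat list" where "Cw n = fst (CD n)"
definition Dw :: "nat \<Rightarrow> nat list" where "Dw n = snd (CD n)"

definition occ_letter :: "nat \<Rightarrow> nat \<Rightarrow> nat list \<Rightarrow> nat" where
  "occ_letter a k w = card {S. S \<subseteq> {..<length w} \<and> card S = k \<and> (\<forall>i\<in>S. w ! i = a)}"

definition occ_const_pattern :: "nat \<Rightarrow> nat list \<Rightarrow> nat" where
  "occ_const_pattern k w = card {S. S \<subseteq> {..<length w} \<and> card S = k \<and>
      (\<forall>i\<in>S. \<forall>j\<in>S. w ! i = w ! j)}"

end

theory Submission
  imports Defs
begin

lemma CD_counts:
  "length (filter ((=) 1) (fst (CD (Suc m)))) = 2^m \<and>
   length (filter ((=) 2) (fst (CD (Suc m)))) = 2^m - 1 \<and>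
   length (filter ((=) 1) (snd (CD (Suc m)))) = 2^m - 1 \<and>
   length (filter ((=) 2) (snd (CD (Suc m)))) = 2^m \<and>
   set (fst (CD (Suc m))) \<subseteq> {1,2} \<and> set (snd (CD (Suc m))) \<subseteq> {1,2}"
proof (induction m)
  case 0
  then show ?case by simp
next
  case (Suc m)
  obtain c d where cd: "CD (Suc m) = (c, d)" by (cases "CD (Suc m)")
  have p: "(2::nat)^m \<ge> 1" by simp
  from Suc cd show ?case using p by (auto simp: cd)
qed

lemma occ_letter_card:
  "occ_letter a k w = card {i. i < length w \<and> w ! i = a} choose k"
proof -
  have "{S. S \<subseteq> {..<length w} \<and> card S = k \<and> (\<forall>i\<in>S. w ! i = a)}
        = {S. S \<subseteq> {i. i < length w \<and> w ! i = a} \<and> card S = k}" by auto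
  then show ?thesis unfolding occ_letter_def by (simp add: n_subsets)
qed

lemma occ_letter_len:
  "occ_letter a k w = length (filter ((=) a) w) choose k"
  unfolding occ_letter_card length_filter_conv_card by (metis (mono_tags, lifting))

lemma occ_const_split:
  assumes "k \<ge> 1" "set w \<subseteq> {1,2}"
  shows "occ_const_pattern k w = occ_letter 1 k w + occ_letter 2 k w"
proof -
  let ?A = "\<lambda>a. {S. S \<subseteq> {..<length w} \<and> card S = k \<and> (\<forall>i\<in>S. w ! i = a)}"
  have eq: "{S. S \<subseteq> {..<length w} \<and> card S = k \<and> (\<forall>i\<in>S. \<forall>j\<in>S. w ! i = w ! j)}
      = ?A 1 \<union> ?A 2"
  proof (rule set_eqI, rule iffI)
    fix S assume S: "S \<in> {S. S \<subseteq> {..<length w} \<and> card S = k \<and> (\<forall>i\<in>S. \<forall>j\<in>S. w ! i = w ! j)}"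
    then have "S \<noteq> {}" using assms(1) by (metis (mono_tags, lifting) card.empty mem_Collect_eq not_one_le_zero)
    then obtain i0 where i0: "i0 \<in> S" by auto
    have "i0 < length w" using S i0 by blast
    then have "w ! i0 \<in> set w" by simp
    then have w12: "w ! i0 = 1 \<or> w ! i0 = 2" using assms(2) by blast
    have all: "\<forall>i\<in>S. w ! i = w ! i0" using S i0 by blast
    have sub: "S \<subseteq> {..<length w}" "card S = k" using S by blast+
    show "S \<in> ?A 1 \<union> ?A 2"
    proof (cases "w ! i0 = 1")
      case True
      then have "S \<in> ?A 1" using all sub by simp
      then show ?thesis by blast
    next
      case False
      then have "w ! i0 = 2" using w12 by blast
      then have "S \<in> ?A 2" using all sub by simp
      then show ?thesis by blast
    qed
  next
    fix S assume "S \<in> ?A 1 \<union> ?A 2"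
    then show "S \<in> {S. S \<subseteq> {..<length w} \<and> card S = k \<and> (\<forall>i\<in>S. \<forall>j\<in>S. w ! i = w ! j)}"
      by auto
  qed
  have fin: "finite (?A a)" for a
    by (rule finite_subset[of _ "Pow {..<length w}"]) blast+
  have disj: "?A 1 \<inter> ?A 2 = {}"
  proof (rule ccontr)
    assume "?A 1 \<inter> ?A 2 \<noteq> {}"
    then obtain S where S: "S \<in> ?A 1" "S \<in> ?A 2" by blast
    then have "S \<noteq> {}" using assms(1) by (metis (mono_tags, lifting) card.empty mem_Collect_eq not_one_le_zero)
    then obtain i where "i \<in> S" by auto
    then have "w ! i = 1" "w ! i = 2" using S by blast+
    then show False by simp
  qed
  show ?thesis unfolding occ_const_pattern_def occ_letter_def eq
    using card_Un_disjoint[OF fin fin disj] by simp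
qed

lemma real_ident:
  fixes N k :: nat
  assumes "k \<noteq> N"
  shows "real ((N choose k) + ((N - 1) choose k)) =
     (2 * real N - real k) / (real N - real k) * real ((N - 1) choose k)"
proof (cases "k < N")
  case True
  have "(N - k) * (N choose k) = N * ((N - 1) choose k)" by (rule binomial_absorb_comp)
  then have "(real N - real k) * real (N choose k) = real N * real ((N - 1) choose k)"
    using True by (metis of_nat_diff of_nat_mult less_imp_le)
  then have h: "real (N choose k) = real N * real ((N - 1) choose k) / (real N - real k)"
    using True by (simp add: field_simps)
  show ?thesis using True by (simp add: h field_simps)
next
  case False
  then have "N < k" using assms by simp
  then have h1: "N choose k = 0" and h2: "(N - 1) choose k = 0" by simp_all
  show ?thesis unfolding h1 h2 by simp
qed

theorem proposition2:
  fixes n k :: nat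
  assumes "n \<ge> 1" and "k \<ge> 1"
  shows "occ_letter 1 k (Cw n) = (2 ^ (n - 1)) choose k
    \<and> occ_letter 2 k (Cw n) = (2 ^ (n - 1) - 1) choose k
    \<and> occ_const_pattern k (Cw n) = ((2 ^ (n - 1)) choose k) + ((2 ^ (n - 1) - 1) choose k)
    \<and> (k \<noteq> 2 ^ (n - 1) \<longrightarrow>
         real (occ_const_pattern k (Cw n)) =
           (2 ^ n - real k) / (2 ^ (n - 1) - real k) * real ((2 ^ (n - 1) - 1) choose k))"
proof -
  obtain m where n: "n = Suc m" using assms(1) by (cases n) auto
  note c = CD_counts[of m]
  have o1: "occ_letter 1 k (Cw n) = (2 ^ (n - 1)) choose k"
    using c by (simp add: occ_letter_len Cw_def n)
  have o2: "occ_letter 2 k (Cw n) = (2 ^ (n - 1) - 1) choose k"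
    using c by (simp add: occ_letter_len Cw_def n)
  have o3: "occ_const_pattern k (Cw n) = ((2 ^ (n - 1)) choose k) + ((2 ^ (n - 1) - 1) choose k)"
    using occ_const_split[OF assms(2), of "Cw n"] c o1 o2 by (simp add: Cw_def n)
  have o4: "k \<noteq> 2 ^ (n - 1) \<longrightarrow>
         real (occ_const_pattern k (Cw n)) =
           (2 ^ n - real k) / (2 ^ (n - 1) - real k) * real ((2 ^ (n - 1) - 1) choose k)"
  proof
    assume k: "k \<noteq> 2 ^ (n - 1)"
    have "(2::real) ^ n = 2 * real (2 ^ (n - 1))" using n by simp
    moreover have "(2::real) ^ (n - 1) = real (2 ^ (n - 1))" by simp
    ultimately show "real (occ_const_pattern k (Cw n)) =
           (2 ^ n - real k) / (2 ^ (n - 1) - real k) * real ((2 ^ (n - 1) - 1) choose k)"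
      using real_ident[OF k] o3 by simp
  qed
  show ?thesis using o1 o2 o3 o4 by blast
qed

end
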